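(* Let $\mathbf p$ be an agreeable memory-one strategy for X with $p_2<1$. (a) If $\mathbf p$ is good, then whenever Y uses a memory-one strategy $\mathbf q$ that is not agreeable (with any initial plays), every associated limit distribution gives $s_Y<R$. (b) If $\mathbf p$ is not good, then for at least one of the two memory-one strategies $\mathbf q=(0,0,0,0)$ or $\mathbf q=(0,1,1,1)$ for Y, every associated limit distribution gives $s_Y\ge R$ and $s_X<R$. (c) If $\mathbf p$ is not of Nash type, then for at least one of the two memory-one strategies $\mathbf q=(0,0,0,0)$ or $\mathbf q=(0,1,1,1)$ for Y, every associated limit distribution gives $s_Y>R$ and $s_X<R$.
   Context: Iterated Prisoner's Dilemma: payoffs $T>R>P>S$ with $2R>T+S$; outcomes of a round are ordered $cc,cd,dc,dd$ (first letter X's play, second Y's; $c$ = cooperate, $d$ = defect); payoff vectors $\mathbf S_X=(R,S,T,P)$, $\mathbf S_Y=(R,T,S,P)$. A memory-one strategy for X is $\mathbf p=(p_1,p_2,p_3,p_4)\in[0,1]^4$, where $p_i$ is the probability that X plays $c$ in the next round given that the current round had the $i$-th outcome. A memory-one strategy for Y is $\mathbf q=(q_1,q_2,q_3,q_4)\in[0,1]^4$ where $q_1,q_2,q_3,q_4$ are the probabilities that Y plays $c$ after the outcomes $cc,dc,cd,dd$ respectively (i.e. indexed from Y's own perspective). A strategy pattern for Y is an arbitrary (possibly randomized and history-dependent) rule for Y's play in each round. Given initial plays and the rules used, let $\mathbf v^n$ be the probability distribution of the outcome of round $n$; a limit distribution is any limit point $\mathbf v$ of the Cesàro averages $\frac1n\sum_{k=1}^n\mathbf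 v^k$, and the associated expected payoffs are $s_X=\langle\mathbf v\cdot\mathbf S_X\rangle$, $s_Y=\langle\mathbf v\cdot\mathbf S_Y\rangle$. A strategy is agreeable if its first entry is $1$. $\mathbf p$ is of Nash type if it is agreeable and, for every strategy pattern of Y and every associated limit distribution, $s_Y\ge R$ implies $s_Y=R$. $\mathbf p$ is good if it is agreeable and, for every strategy pattern of Y and every associated limit distribution, $s_Y\ge R$ implies $s_Y=s_X=R$. *)

theory Defs
  imports Complex_Main
begin

text \<open>An outcome of a round is a pair (X cooperates?, Y cooperates?);
  True = c, False = d.  So cc = (True,True), cd = (True,False),
  dc = (False,True), dd = (False,False).\<close>
type_synonym outcome = "bool \<times> bool"

type_synonym mem1 = "real \<times> real \<times> real \<times> real"

definition valid_mem1 :: "mem1 \<Rightarrow> bool" where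
  "valid_mem1 p = (case p of (p1, p2, p3, p4) \<Rightarrow>
      0 \<le> p1 \<and> p1 \<le> 1 \<and> 0 \<le> p2 \<and> p2 \<le> 1 \<and> 0 \<le> p3 \<and> p3 \<le> 1 \<and> 0 \<le> p4 \<and> p4 \<le> 1)"

definition agreeable :: "mem1 \<Rightarrow> bool" where
  "agreeable p = (fst p = 1)"

fun pX :: "mem1 \<Rightarrow> outcome \<Rightarrow> real" where
  "pX (p1, p2, p3, p4) (x, y) =
     (if x then (if y then p1 else p2) else (if y then p3 else p4))"

text \<open>Y's memory-one strategy q=(q1,q2,q3,q4): probabilities after cc, dc, cd, dd from
  Y's own perspective (Y's play first), i.e. after X-first outcomes cc, cd... namely
  q2 is used when Y played c and X played d, q3 when Y played d and X played c.\<close>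
fun qY :: "mem1 \<Rightarrow> outcome \<Rightarrow> real" where
  "qY (q1, q2, q3, q4) (x, y) =
     (if y then (if x then q1 else q2) else (if x then q3 else q4))"

text \<open>A strategy pattern for Y: for each history (chronological list of past outcomes)
  the probability that Y cooperates in the next round.\<close>
definition valid_pattern :: "(outcome list \<Rightarrow> real) \<Rightarrow> bool" where
  "valid_pattern ys = (\<forall>h. 0 \<le> ys h \<and> ys h \<le> 1)"

definition mem1_pattern :: "bool \<Rightarrow> mem1 \<Rightarrow> outcome list \<Rightarrow> real" where
  "mem1_pattern y0 q h = (if h = [] then (if y0 then 1 else 0) else qY q (last h))"

definition step_prob :: "bool \<Rightarrow> mem1 \<Rightarrow> (outcome list \<Rightarrow> real) \<Rightarrow> outcome list \<Rightarrow> outcome \<Rightarrow> real" where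
  "step_prob x0 p ys h oc =
     (let a = (if h = [] then (if x0 then 1 else 0) else pX p (last h));
          b = ys h
      in (if fst oc then a else 1 - a) * (if snd oc then b else 1 - b))"

fun hist_prob_rev :: "bool \<Rightarrow> mem1 \<Rightarrow> (outcome list \<Rightarrow> real) \<Rightarrow> outcome list \<Rightarrow> real" where
  "hist_prob_rev x0 p ys [] = 1"
| "hist_prob_rev x0 p ys (oc # rh) = hist_prob_rev x0 p ys rh * step_prob x0 p ys (rev rh) oc"

definition hist_prob :: "bool \<Rightarrow> mem1 \<Rightarrow> (outcome list \<Rightarrow> real) \<Rightarrow> outcome list \<Rightarrow> real" where
  "hist_prob x0 p ys h = hist_prob_rev x0 p ys (rev h)"

text \<open>Distribution v^n of the outcome of round n (n \<ge> 1).\<close>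
definition round_dist :: "bool \<Rightarrow> mem1 \<Rightarrow> (outcome list \<Rightarrow> real) \<Rightarrow> nat \<Rightarrow> outcome \<Rightarrow> real" where
  "round_dist x0 p ys n oc =
     (\<Sum>h\<in>{h. length h = n \<and> h \<noteq> [] \<and> last h = oc}. hist_prob x0 p ys h)"

definition cesaro :: "bool \<Rightarrow> mem1 \<Rightarrow> (outcome list \<Rightarrow> real) \<Rightarrow> nat \<Rightarrow> outcome \<Rightarrow> real" where
  "cesaro x0 p ys n oc = (\<Sum>k=1..n. round_dist x0 p ys k oc) / real n"

definition limit_dist :: "bool \<Rightarrow> mem1 \<Rightarrow> (outcome list \<Rightarrow> real) \<Rightarrow> (outcome \<Rightarrow> real) \<Rightarrow> bool" where
  "limit_dist x0 p ys v =
     (\<exists>r. strict_mono r \<and> (\<forall>oc. (\<lambda>n. cesaro x0 p ys (r n) oc) \<longlonglongrightarrow> v oc))"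

definition sX :: "real \<Rightarrow> real \<Rightarrow> real \<Rightarrow> real \<Rightarrow> (outcome \<Rightarrow> real) \<Rightarrow> real" where
  "sX T R P S v = R * v (True, True) + S * v (True, False) + T * v (False, True) + P * v (False, False)"

definition sY :: "real \<Rightarrow> real \<Rightarrow> real \<Rightarrow> real \<Rightarrow> (outcome \<Rightarrow> real) \<Rightarrow> real" where
  "sY T R P S v = R * v (True, True) + T * v (True, False) + S * v (False, True) + P * v (False, False)"

definition nash_type :: "real \<Rightarrow> real \<Rightarrow> real \<Rightarrow> real \<Rightarrow> mem1 \<Rightarrow> bool" where
  "nash_type T R P S p = (agreeable p \<and>
     (\<forall>x0 ys v. valid_pattern ys \<longrightarrow> limit_dist x0 p ys v \<longrightarrow>
        sY T R P S v \<ge> R \<longrightarrow> sY T R P S v = R))"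

definition good :: "real \<Rightarrow> real \<Rightarrow> real \<Rightarrow> real \<Rightarrow> mem1 \<Rightarrow> bool" where
  "good T R P S p = (agreeable p \<and>
     (\<forall>x0 ys v. valid_pattern ys \<longrightarrow> limit_dist x0 p ys v \<longrightarrow>
        sY T R P S v \<ge> R \<longrightarrow> sY T R P S v = R \<and> sX T R P S v = R))"

end

theory Submission imports Defs begin

abbreviation LL :: "nat \<Rightarrow> outcome list set" where "LL n \<equiv> {h. length h = n}"

lemma UNIV_outcome: "(UNIV::outcome set) = {(True,True),(True,False),(False,True),(False,False)}"
  by auto

lemma sum_outcome: "(\<Sum>oc\<in>UNIV. f oc) = f (True,True) + f (True,False) + f (False,True) + f (False,False)"
  for f :: "outcome \<Rightarrow> 'a::comm_monoid_add"
  by (simp add: UNIV_outcome add.assoc)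

lemma finite_LL: "finite (LL n)"
  using finite_lists_length_eq[of "UNIV::outcome set" n] by simp

lemma LL_Suc: "LL (Suc n) = (\<lambda>(h,oc). h @ [oc]) ` (LL n \<times> UNIV)"
proof
  show "LL (Suc n) \<subseteq> (\<lambda>(h,oc). h @ [oc]) ` (LL n \<times> UNIV)"
  proof
    fix h assume h: "h \<in> LL (Suc n)"
    then have "h \<noteq> []" by auto
    then have "h = butlast h @ [last h]" by simp
    moreover have "butlast h \<in> LL n" using h by simp
    ultimately show "h \<in> (\<lambda>(h,oc). h @ [oc]) ` (LL n \<times> UNIV)"
      by (metis (no_types, lifting) UNIV_I case_prod_conv image_eqI mem_Sigma_iff)
  qed
qed auto

lemma sum_LL_Suc: "(\<Sum>h\<in>LL (Suc n). F h) = (\<Sum>h\<in>LL n. \<Sum>oc\<in>UNIV. F (h @ [oc]))"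
proof -
  have inj: "inj_on (\<lambda>(h,oc). h @ [oc]) (LL n \<times> (UNIV::outcome set))"
    by (auto simp: inj_on_def)
  have "(\<Sum>h\<in>LL (Suc n). F h) = (\<Sum>x\<in>LL n \<times> UNIV. F ((\<lambda>(h,oc). h @ [oc]) x))"
    unfolding LL_Suc by (rule sum.reindex[OF inj, unfolded comp_def])
  also have "\<dots> = (\<Sum>h\<in>LL n. \<Sum>oc\<in>UNIV. F (h @ [oc]))"
    by (simp add: sum.cartesian_product split_def)
  finally show ?thesis .
qed

lemma hist_prob_snoc: "hist_prob x0 p ys (h @ [oc]) = hist_prob x0 p ys h * step_prob x0 p ys h oc"
  by (simp add: hist_prob_def)

lemma pX_bounds: "valid_mem1 p \<Longrightarrow> 0 \<le> pX p oc \<and> pX p oc \<le> 1"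
  by (cases p; cases oc) (auto simp: valid_mem1_def)

lemma qY_bounds: "valid_mem1 q \<Longrightarrow> 0 \<le> qY q oc \<and> qY q oc \<le> 1"
  by (cases q; cases oc) (auto simp: valid_mem1_def)

lemma valid_mem1_pattern: "valid_mem1 q \<Longrightarrow> valid_pattern (mem1_pattern y0 q)"
  using qY_bounds by (auto simp: valid_pattern_def mem1_pattern_def)

lemma step_nonneg:
  assumes "valid_mem1 p" "valid_pattern ys"
  shows "0 \<le> step_prob x0 p ys h oc"
proof -
  define a where "a = (if h = [] then (if x0 then 1 else 0) else pX p (last h))"
  have a: "0 \<le> a" "a \<le> 1" using pX_bounds[OF assms(1)] by (auto simp: a_def)
  have b: "0 \<le> ys h" "ys h \<le> 1" using assms(2) by (auto simp: valid_pattern_def)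
  show ?thesis unfolding step_prob_def Let_def a_def[symmetric]
    using a b by (auto intro!: mult_nonneg_nonneg)
qed

lemma step_sum: "(\<Sum>oc\<in>UNIV. step_prob x0 p ys h oc) = 1"
  by (simp add: sum_outcome step_prob_def Let_def algebra_simps)

lemma hist_prob_rev_nonneg:
  assumes "valid_mem1 p" "valid_pattern ys"
  shows "0 \<le> hist_prob_rev x0 p ys rh"
  by (induction rh) (auto intro!: mult_nonneg_nonneg step_nonneg[OF assms])

lemma hist_prob_nonneg:
  assumes "valid_mem1 p" "valid_pattern ys"
  shows "0 \<le> hist_prob x0 p ys h"
  unfolding hist_prob_def by (rule hist_prob_rev_nonneg[OF assms])

lemma hist_prob_sum: "(\<Sum>h\<in>LL n. hist_prob x0 p ys h) = 1"
proof (induction n)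
  case 0
  have "LL 0 = {[]}" by auto
  then show ?case by (simp add: hist_prob_def)
next
  case (Suc n)
  have "(\<Sum>h\<in>LL (Suc n). hist_prob x0 p ys h)
      = (\<Sum>h\<in>LL n. hist_prob x0 p ys h * (\<Sum>oc\<in>UNIV. step_prob x0 p ys h oc))"
    by (simp add: sum_LL_Suc hist_prob_snoc sum_distrib_left)
  also have "\<dots> = 1" using Suc by (simp add: step_sum)
  finally show ?case .
qed

lemma rd_alt: "round_dist x0 p ys n oc =
   (\<Sum>h\<in>LL n. if h \<noteq> [] \<and> last h = oc then hist_prob x0 p ys h else 0)"
proof -
  have "{h. length h = n \<and> h \<noteq> [] \<and> last h = oc} = {h \<in> LL n. h \<noteq> [] \<and> last h = oc}" by auto
  then show ?thesis unfolding round_dist_def by (simp only: sum.inter_filter[OF finite_LL])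
qed

lemma rd_nonneg:
  assumes "valid_mem1 p" "valid_pattern ys"
  shows "0 \<le> round_dist x0 p ys n oc"
  unfolding rd_alt by (auto intro!: sum_nonneg hist_prob_nonneg[OF assms])

lemma rd_le1:
  assumes "valid_mem1 p" "valid_pattern ys"
  shows "round_dist x0 p ys n oc \<le> 1"
proof -
  have "round_dist x0 p ys n oc \<le> (\<Sum>h\<in>LL n. hist_prob x0 p ys h)"
    unfolding rd_alt by (rule sum_mono) (auto intro: hist_prob_nonneg[OF assms])
  then show ?thesis by (simp add: hist_prob_sum)
qed

lemma sum_last:
  assumes "n \<ge> 1"
  shows "(\<Sum>oc\<in>UNIV. round_dist x0 p ys n oc * g oc) = (\<Sum>h\<in>LL n. hist_prob x0 p ys h * g (last h))"
proof -
  have "(\<Sum>oc\<in>UNIV. round_dist x0 p ys n oc * g oc)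
     = (\<Sum>oc\<in>UNIV. \<Sum>h\<in>LL n. (if h \<noteq> [] \<and> last h = oc then hist_prob x0 p ys h else 0) * g oc)"
    by (simp add: rd_alt sum_distrib_right)
  also have "\<dots> = (\<Sum>h\<in>LL n. \<Sum>oc\<in>UNIV. (if h \<noteq> [] \<and> last h = oc then hist_prob x0 p ys h else 0) * g oc)"
    by (rule sum.swap)
  also have "\<dots> = (\<Sum>h\<in>LL n. hist_prob x0 p ys h * g (last h))"
  proof (rule sum.cong[OF refl])
    fix h assume "h \<in> LL n"
    then have "h \<noteq> []" using assms by auto
    then show "(\<Sum>oc\<in>UNIV. (if h \<noteq> [] \<and> last h = oc then hist_prob x0 p ys h else 0) * g oc)
        = hist_prob x0 p ys h * g (last h)"
    proof -
      have "\<And>oc. (if h \<noteq> [] \<and> last h = oc then hist_prob x0 p ys h else 0) * g oc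
          = (if last h = oc then hist_prob x0 p ys h * g oc else 0)" using \<open>h \<noteq> []\<close> by simp
      then show ?thesis by (simp only: sum.delta[OF finite_UNIV]) simp
    qed
  qed
  finally show ?thesis .
qed

lemma rd_Suc:
  "(\<Sum>oc\<in>UNIV. round_dist x0 p ys (Suc n) oc * G oc)
   = (\<Sum>h\<in>LL n. hist_prob x0 p ys h * (\<Sum>oc\<in>UNIV. step_prob x0 p ys h oc * G oc))"
  by (simp add: sum_last sum_LL_Suc hist_prob_snoc sum_distrib_left mult.assoc)

lemma rd_sum1: "n \<ge> 1 \<Longrightarrow> (\<Sum>oc\<in>UNIV. round_dist x0 p ys n oc) = 1"
  using sum_last[of n x0 p ys "\<lambda>_. 1"] by (simp add: hist_prob_sum)


lemma cesaro_sum: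
  "(\<Sum>oc\<in>UNIV. cesaro x0 p ys n oc * h oc) = (\<Sum>k=1..n. \<Sum>oc\<in>UNIV. round_dist x0 p ys k oc * h oc) / real n"
proof -
  have "(\<Sum>oc\<in>UNIV. cesaro x0 p ys n oc * h oc) = (\<Sum>oc\<in>UNIV. (\<Sum>k=1..n. round_dist x0 p ys k oc * h oc) / real n)"
    unfolding cesaro_def by (simp add: sum_distrib_right)
  also have "\<dots> = (\<Sum>oc\<in>UNIV. \<Sum>k=1..n. round_dist x0 p ys k oc * h oc) / real n"
    by (simp add: sum_divide_distrib)
  also have "\<dots> = (\<Sum>k=1..n. \<Sum>oc\<in>UNIV. round_dist x0 p ys k oc * h oc) / real n"
    by (subst sum.swap) (rule refl)
  finally show ?thesis .
qed

lemma cesaro_stationary: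
  assumes vp: "valid_mem1 p" "valid_pattern ys"
  and rec: "\<And>k. k \<ge> 1 \<Longrightarrow> (\<Sum>oc\<in>UNIV. round_dist x0 p ys (Suc k) oc * g oc)
                        = (\<Sum>oc\<in>UNIV. round_dist x0 p ys k oc * h oc)"
  and lim: "limit_dist x0 p ys v"
  shows "(\<Sum>oc\<in>UNIV. v oc * g oc) = (\<Sum>oc\<in>UNIV. v oc * h oc)"
proof -
  obtain r where r: "strict_mono r" and conv: "\<And>oc. (\<lambda>n. cesaro x0 p ys (r n) oc) \<longlonglongrightarrow> v oc"
    using lim unfolding limit_dist_def by blast
  define D where "D k = (\<Sum>oc\<in>UNIV. round_dist x0 p ys k oc * g oc)" for k
  define B where "B = (\<Sum>oc\<in>UNIV. \<bar>g oc\<bar>)"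
  have DB: "\<bar>D k\<bar> \<le> B" for k
  proof -
    have "\<bar>D k\<bar> \<le> (\<Sum>oc\<in>UNIV. \<bar>round_dist x0 p ys k oc * g oc\<bar>)"
      unfolding D_def by (rule sum_abs)
    also have "\<dots> \<le> B" unfolding B_def
    proof (rule sum_mono)
      fix oc
      have "\<bar>round_dist x0 p ys k oc * g oc\<bar> = round_dist x0 p ys k oc * \<bar>g oc\<bar>"
        using rd_nonneg[OF vp] by (simp add: abs_mult)
      also have "\<dots> \<le> 1 * \<bar>g oc\<bar>"
        by (rule mult_right_mono) (auto simp: rd_le1[OF vp])
      finally show "\<bar>round_dist x0 p ys k oc * g oc\<bar> \<le> \<bar>g oc\<bar>" by simp
    qed
    finally show ?thesis .
  qed
  define d where "d n = (\<Sum>oc\<in>UNIV. cesaro x0 p ys n oc * h oc) - (\<Sum>oc\<in>UNIV. cesaro x0 p ys n oc * g oc)" for n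
  have deq: "d n = (D (Suc n) - D 1) / real n" if "n \<ge> 1" for n
  proof -
    have "(\<Sum>k=1..n. \<Sum>oc\<in>UNIV. round_dist x0 p ys k oc * h oc) = (\<Sum>k=1..n. D (Suc k))"
      using rec by (auto simp: D_def intro!: sum.cong)
    then have "d n = ((\<Sum>k=1..n. D (Suc k)) - (\<Sum>k=1..n. D k)) / real n"
      unfolding d_def cesaro_sum D_def by (simp add: diff_divide_distrib)
    also have "\<dots> = (\<Sum>k=1..n. D (Suc k) - D k) / real n" by (simp add: sum_subtractf)
    also have "\<dots> = (D (Suc n) - D 1) / real n" using that by (simp add: sum_Suc_diff)
    finally show ?thesis .
  qed
  have d0: "d \<longlonglongrightarrow> 0"
  proof (rule tendsto_0_le[OF lim_1_over_n])
    show "\<forall>\<^sub>F n in sequentially. norm (d n) \<le> norm (1 / real n) * (2 * B)"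
      using eventually_ge_at_top[of 1]
    proof eventually_elim
      case (elim n)
      have "\<bar>D (Suc n) - D 1\<bar> \<le> 2 * B" using DB[of "Suc n"] DB[of 1] by linarith
      then show ?case using elim by (simp add: deq abs_divide divide_right_mono)
    qed
  qed
  then have "(d \<circ> r) \<longlonglongrightarrow> 0" using LIMSEQ_subseq_LIMSEQ r by blast
  moreover have "(d \<circ> r) \<longlonglongrightarrow> (\<Sum>oc\<in>UNIV. v oc * h oc) - (\<Sum>oc\<in>UNIV. v oc * g oc)"
    unfolding comp_def d_def
    by (intro tendsto_diff tendsto_sum tendsto_mult_right conv)
  ultimately show ?thesis using LIMSEQ_unique by fastforce
qed

lemma limit_nonneg:
  assumes vp: "valid_mem1 p" "valid_pattern ys" and lim: "limit_dist x0 p ys v"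
  shows "0 \<le> v oc"
proof -
  obtain r where conv: "(\<lambda>n. cesaro x0 p ys (r n) oc) \<longlonglongrightarrow> v oc"
    using lim unfolding limit_dist_def by blast
  show ?thesis
    by (rule LIMSEQ_le_const[OF conv])
       (auto simp: cesaro_def intro!: divide_nonneg_nonneg sum_nonneg rd_nonneg[OF vp])
qed

lemma limit_sum1:
  assumes lim: "limit_dist x0 p ys v"
  shows "(\<Sum>oc\<in>UNIV. v oc) = 1"
proof -
  obtain r where r: "strict_mono r" and conv: "\<And>oc. (\<lambda>n. cesaro x0 p ys (r n) oc) \<longlonglongrightarrow> v oc"
    using lim unfolding limit_dist_def by blast
  have t: "(\<lambda>n. \<Sum>oc\<in>UNIV. cesaro x0 p ys (r n) oc) \<longlonglongrightarrow> (\<Sum>oc\<in>UNIV. v oc)"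
    by (intro tendsto_sum conv)
  have ev: "\<forall>\<^sub>F n in sequentially. (\<Sum>oc\<in>UNIV. cesaro x0 p ys (r n) oc) = 1"
    using eventually_ge_at_top[of 1]
  proof eventually_elim
    case (elim n)
    then have "r n \<ge> 1" using seq_suble[OF r, of n] by linarith
    then show ?case
      using cesaro_sum[of x0 p ys "r n" "\<lambda>_. 1"] rd_sum1[of _ x0 p ys] by simp
  qed
  have "(\<lambda>n. \<Sum>oc\<in>UNIV. cesaro x0 p ys (r n) oc) \<longlonglongrightarrow> 1"
    using tendsto_cong[OF ev, of 1] by simp
  then show ?thesis using t LIMSEQ_unique by blast
qed


lemma stationary_gen:
  assumes vp: "valid_mem1 p" "valid_pattern ys" and lim: "limit_dist x0 p ys v"
  and st: "\<And>h. h \<noteq> [] \<Longrightarrow> (\<Sum>oc\<in>UNIV. step_prob x0 p ys h oc * G oc) = H (last h)"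
  shows "(\<Sum>oc\<in>UNIV. v oc * G oc) = (\<Sum>oc\<in>UNIV. v oc * H oc)"
proof (rule cesaro_stationary[OF vp _ lim])
  fix k :: nat assume k: "k \<ge> 1"
  have "(\<Sum>oc\<in>UNIV. round_dist x0 p ys (Suc k) oc * G oc)
     = (\<Sum>h\<in>LL k. hist_prob x0 p ys h * (\<Sum>oc\<in>UNIV. step_prob x0 p ys h oc * G oc))"
    by (rule rd_Suc)
  also have "\<dots> = (\<Sum>h\<in>LL k. hist_prob x0 p ys h * H (last h))"
  proof (rule sum.cong[OF refl])
    fix h assume "h \<in> LL k"
    then have "h \<noteq> []" using k by auto
    then show "hist_prob x0 p ys h * (\<Sum>oc\<in>UNIV. step_prob x0 p ys h oc * G oc)
       = hist_prob x0 p ys h * H (last h)" by (simp add: st)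
  qed
  also have "\<dots> = (\<Sum>oc\<in>UNIV. round_dist x0 p ys k oc * H oc)"
    using sum_last[OF k] by simp
  finally show "(\<Sum>oc\<in>UNIV. round_dist x0 p ys (Suc k) oc * G oc)
     = (\<Sum>oc\<in>UNIV. round_dist x0 p ys k oc * H oc)" .
qed

lemma KX:
  assumes vp: "valid_mem1 p" "valid_pattern ys" and lim: "limit_dist x0 p ys v"
  shows "(\<Sum>oc\<in>UNIV. v oc * (if fst oc then 1 else 0)) = (\<Sum>oc\<in>UNIV. v oc * pX p oc)"
  by (rule stationary_gen[OF vp lim]) (simp add: sum_outcome step_prob_def Let_def algebra_simps)

lemma KY:
  assumes vp: "valid_mem1 p" "valid_mem1 q" and lim: "limit_dist x0 p (mem1_pattern y0 q) v"
  shows "(\<Sum>oc\<in>UNIV. v oc * (if snd oc then 1 else 0)) = (\<Sum>oc\<in>UNIV. v oc * qY q oc)"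
  by (rule stationary_gen[OF vp(1) valid_mem1_pattern[OF vp(2)] lim])
     (simp add: sum_outcome step_prob_def Let_def algebra_simps mem1_pattern_def)

lemma K4:
  assumes vp: "valid_mem1 p" "valid_mem1 q" and lim: "limit_dist x0 p (mem1_pattern y0 q) v"
  shows "(\<Sum>oc\<in>UNIV. v oc * (if oc = (False,False) then 1 else 0))
       = (\<Sum>oc\<in>UNIV. v oc * ((1 - pX p oc) * (1 - qY q oc)))"
  by (rule stationary_gen[OF vp(1) valid_mem1_pattern[OF vp(2)] lim])
     (simp add: sum_outcome step_prob_def Let_def algebra_simps mem1_pattern_def)

lemma akin:
  assumes vp: "valid_mem1 (1,p2,p3,p4)" "valid_pattern ys" and lim: "limit_dist x0 (1,p2,p3,p4) ys v"
  shows "(1 - p2) * v (True,False) = p3 * v (False,True) + p4 * v (False,False)"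
    and "0 \<le> v (True,True)" "0 \<le> v (True,False)" "0 \<le> v (False,True)" "0 \<le> v (False,False)"
    and "v (True,True) + v (True,False) + v (False,True) + v (False,False) = 1"
proof -
  show "0 \<le> v (True,True)" "0 \<le> v (True,False)" "0 \<le> v (False,True)" "0 \<le> v (False,False)"
    by (rule limit_nonneg[OF vp lim])+
  show "v (True,True) + v (True,False) + v (False,True) + v (False,False) = 1"
    using limit_sum1[OF lim] by (simp add: sum_outcome)
  show "(1 - p2) * v (True,False) = p3 * v (False,True) + p4 * v (False,False)"
    using KX[OF vp lim] by (simp add: sum_outcome algebra_simps)
qed


lemma key_id:
  fixes a b c d p2 p3 p4 T R P S :: real
  assumes "a + b + c + d = 1" "(1 - p2) * b = p3 * c + p4 * d"
  shows "(1 - p2) * ((R*a + T*b + S*c + P*d) - R)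
       = ((T-R)*p3 - (R-S)*(1-p2)) * c + ((T-R)*p4 - (R-P)*(1-p2)) * d"
proof -
  have a: "a = 1 - b - c - d" using assms(1) by simp
  have "(1 - p2) * ((R*a + T*b + S*c + P*d) - R)
      = (T-R)*((1-p2)*b) + (S-R)*(1-p2)*c + (P-R)*(1-p2)*d"
    by (simp add: a algebra_simps)
  also have "\<dots> = ((T-R)*p3 - (R-S)*(1-p2)) * c + ((T-R)*p4 - (R-P)*(1-p2)) * d"
    unfolding assms(2) by (simp add: algebra_simps)
  finally show ?thesis .
qed

lemma sum_payoff:
  fixes a b c d T R P S :: real
  assumes "a + b + c + d = 1" "0 \<le> b" "0 \<le> c" "0 \<le> d" "T + S < 2*R" "P < R"
  shows "(R*a + S*b + T*c + P*d) + (R*a + T*b + S*c + P*d) \<le> 2*R"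
    and "a < 1 \<Longrightarrow> (R*a + S*b + T*c + P*d) + (R*a + T*b + S*c + P*d) < 2*R"
proof -
  have a: "a = 1 - b - c - d" using assms(1) by simp
  have eq: "(R*a + S*b + T*c + P*d) + (R*a + T*b + S*c + P*d)
      = 2*R - ((2*R - T - S)*(b+c) + (2*(R-P))*d)"
    by (simp add: a algebra_simps)
  have t1: "0 \<le> (2*R - T - S)*(b+c)" using assms by (intro mult_nonneg_nonneg) auto
  have t2: "0 \<le> (2*(R-P))*d" using assms by (intro mult_nonneg_nonneg) auto
  show "(R*a + S*b + T*c + P*d) + (R*a + T*b + S*c + P*d) \<le> 2*R"
    using eq t1 t2 by linarith
  assume "a < 1"
  then have "0 < b + c \<or> 0 < d" using a assms by linarith
  then have "0 < (2*R - T - S)*(b+c) + (2*(R-P))*d"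
  proof
    assume "0 < b + c"
    then have "0 < (2*R - T - S)*(b+c)" using assms by (intro mult_pos_pos) auto
    then show ?thesis using t2 by linarith
  next
    assume "0 < d"
    then have "0 < (2*(R-P))*d" using assms by (intro mult_pos_pos) auto
    then show ?thesis using t1 by linarith
  qed
  then show "(R*a + S*b + T*c + P*d) + (R*a + T*b + S*c + P*d) < 2*R"
    using eq by linarith
qed

lemma good_suff:
  fixes T R P S p2 p3 p4 :: real
  assumes ord: "T > R" "R > P" "P > S"
    and vp: "valid_mem1 (1,p2,p3,p4)" and p2: "p2 < 1"
    and c3: "(T-R)*p3 - (R-S)*(1-p2) < 0" and c4: "(T-R)*p4 - (R-P)*(1-p2) < 0"
  shows "good T R P S (1,p2,p3,p4)"
  unfolding good_def agreeable_def
proof (intro conjI allI impI)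
  fix x0 ys v assume ys: "valid_pattern ys" and lim: "limit_dist x0 (1,p2,p3,p4) ys v"
    and ge: "R \<le> sY T R P S v"
  note A = akin[OF vp ys lim]
  have id: "(1 - p2) * (sY T R P S v - R)
     = ((T-R)*p3 - (R-S)*(1-p2)) * v (False,True) + ((T-R)*p4 - (R-P)*(1-p2)) * v (False,False)"
    unfolding sY_def by (rule key_id[OF A(6) A(1)])
  have "0 \<le> (1 - p2) * (sY T R P S v - R)" using ge p2 by simp
  moreover have n3: "((T-R)*p3 - (R-S)*(1-p2)) * v (False,True) \<le> 0"
    using c3 A(4) by (intro mult_nonpos_nonneg) auto
  moreover have n4: "((T-R)*p4 - (R-P)*(1-p2)) * v (False,False) \<le> 0"
    using c4 A(5) by (intro mult_nonpos_nonneg) auto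
  ultimately have "((T-R)*p3 - (R-S)*(1-p2)) * v (False,True) = 0"
    and "((T-R)*p4 - (R-P)*(1-p2)) * v (False,False) = 0" using id by linarith+
  then have v3: "v (False,True) = 0" and v4: "v (False,False) = 0" using c3 c4 by auto
  then have "(1 - p2) * v (True,False) = 0" using A(1) by simp
  then have v2: "v (True,False) = 0" using p2 by simp
  then have v1: "v (True,True) = 1" using A(6) v3 v4 by simp
  show "sY T R P S v = R" "sX T R P S v = R"
    using v1 v2 v3 v4 by (simp_all add: sY_def sX_def)
qed simp

lemma nash_suff:
  fixes T R P S p2 p3 p4 :: real
  assumes ord: "T > R" "R > P" "P > S"
    and vp: "valid_mem1 (1,p2,p3,p4)" and p2: "p2 < 1"
    and c3: "(T-R)*p3 - (R-S)*(1-p2) \<le> 0" and c4: "(T-R)*p4 - (R-P)*(1-p2) \<le> 0"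
  shows "nash_type T R P S (1,p2,p3,p4)"
  unfolding nash_type_def agreeable_def
proof (intro conjI allI impI)
  fix x0 ys v assume ys: "valid_pattern ys" and lim: "limit_dist x0 (1,p2,p3,p4) ys v"
    and ge: "R \<le> sY T R P S v"
  note A = akin[OF vp ys lim]
  have id: "(1 - p2) * (sY T R P S v - R)
     = ((T-R)*p3 - (R-S)*(1-p2)) * v (False,True) + ((T-R)*p4 - (R-P)*(1-p2)) * v (False,False)"
    unfolding sY_def by (rule key_id[OF A(6) A(1)])
  moreover have n3: "((T-R)*p3 - (R-S)*(1-p2)) * v (False,True) \<le> 0"
    using c3 A(4) by (intro mult_nonpos_nonneg) auto
  moreover have n4: "((T-R)*p4 - (R-P)*(1-p2)) * v (False,False) \<le> 0"
    using c4 A(5) by (intro mult_nonpos_nonneg) auto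
  ultimately have "(1 - p2) * (sY T R P S v - R) \<le> 0" by linarith
  then have "sY T R P S v - R \<le> 0" using p2 by (simp add: mult_le_0_iff)
  then show "sY T R P S v = R" using ge by linarith
qed simp


lemma caseB:
  fixes T R P S p2 p3 p4 :: real
  assumes ord: "T > R" "R > P" "P > S" "2 * R > T + S"
    and vp: "valid_mem1 (1,p2,p3,p4)" and p2: "p2 < 1"
    and c4: "(T-R)*p4 - (R-P)*(1-p2) \<ge> 0"
    and lim: "limit_dist x0 (1,p2,p3,p4) (mem1_pattern y0 (0,0,0,0)) v"
  shows "R \<le> sY T R P S v \<and> sX T R P S v < R \<and>
         ((T-R)*p4 - (R-P)*(1-p2) > 0 \<longrightarrow> R < sY T R P S v)"
proof -
  have vq: "valid_mem1 (0::real,0::real,0::real,0::real)" by (simp add: valid_mem1_def)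
  note A = akin[OF vp valid_mem1_pattern[OF vq] lim]
  have "v (True,True) + v (False,True) = 0" using KY[OF vp vq lim] by (simp add: sum_outcome)
  then have v1: "v (True,True) = 0" and v3: "v (False,True) = 0" using A(2,4) by linarith+
  have id: "(1 - p2) * (sY T R P S v - R) = ((T-R)*p4 - (R-P)*(1-p2)) * v (False,False)"
    using key_id[OF A(6) A(1), where T=T and R=R and S=S and P=P] v3 unfolding sY_def by simp
  have "0 \<le> ((T-R)*p4 - (R-P)*(1-p2)) * v (False,False)"
    using c4 A(5) by (rule mult_nonneg_nonneg)
  then have "0 \<le> (1 - p2) * (sY T R P S v - R)" by (simp only: id)
  then have geR: "R \<le> sY T R P S v" using p2 by (simp add: zero_le_mult_iff)
  have "sX T R P S v + sY T R P S v < 2 * R"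
    unfolding sX_def sY_def using sum_payoff(2)[OF A(6) A(3) A(4) A(5)] ord v1 by simp
  moreover have "(T-R)*p4 - (R-P)*(1-p2) > 0 \<longrightarrow> R < sY T R P S v"
  proof
    assume pos: "(T-R)*p4 - (R-P)*(1-p2) > 0"
    have "v (False,False) \<noteq> 0"
    proof
      assume "v (False,False) = 0"
      then have "v (True,False) = 1" using A(6) v1 v3 by simp
      then show False using A(1) v3 \<open>v (False,False) = 0\<close> p2 by simp
    qed
    then have "v (False,False) > 0" using A(5) by simp
    then have "0 < ((T-R)*p4 - (R-P)*(1-p2)) * v (False,False)" using pos by simp
    then have "0 < (1 - p2) * (sY T R P S v - R)" by (simp only: id)
    then show "R < sY T R P S v" using p2 by (simp add: zero_less_mult_iff)
  qed
  ultimately show ?thesis using geR by linarith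
qed

lemma caseA:
  fixes T R P S p2 p3 p4 :: real
  assumes ord: "T > R" "R > P" "P > S" "2 * R > T + S"
    and vp: "valid_mem1 (1,p2,p3,p4)" and p2: "p2 < 1"
    and c3: "(T-R)*p3 - (R-S)*(1-p2) \<ge> 0"
    and lim: "limit_dist x0 (1,p2,p3,p4) (mem1_pattern y0 (0,1,1,1)) v"
  shows "R \<le> sY T R P S v \<and> sX T R P S v < R \<and>
         ((T-R)*p3 - (R-S)*(1-p2) > 0 \<longrightarrow> R < sY T R P S v)"
proof -
  have vq: "valid_mem1 (0::real,1::real,1::real,1::real)" by (simp add: valid_mem1_def)
  note A = akin[OF vp valid_mem1_pattern[OF vq] lim]
  have "v (True,True) + v (False,True) = v (True,False) + v (False,True) + v (False,False)"
    using KY[OF vp vq lim] by (simp add: sum_outcome)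
  moreover have v4: "v (False,False) = 0" using K4[OF vp vq lim] by (simp add: sum_outcome)
  ultimately have v12: "v (True,True) = v (True,False)" by simp
  have id: "(1 - p2) * (sY T R P S v - R) = ((T-R)*p3 - (R-S)*(1-p2)) * v (False,True)"
    using key_id[OF A(6) A(1), where T=T and R=R and S=S and P=P] v4 unfolding sY_def by simp
  have "0 \<le> ((T-R)*p3 - (R-S)*(1-p2)) * v (False,True)"
    using c3 A(4) by (rule mult_nonneg_nonneg)
  then have "0 \<le> (1 - p2) * (sY T R P S v - R)" by (simp only: id)
  then have geR: "R \<le> sY T R P S v" using p2 by (simp add: zero_le_mult_iff)
  have "v (True,True) < 1" using A(6) A(4) v4 v12 by linarith
  then have "sX T R P S v + sY T R P S v < 2 * R"
    unfolding sX_def sY_def using sum_payoff(2)[OF A(6) A(3) A(4) A(5)] ord by simp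
  moreover have "(T-R)*p3 - (R-S)*(1-p2) > 0 \<longrightarrow> R < sY T R P S v"
  proof
    assume pos: "(T-R)*p3 - (R-S)*(1-p2) > 0"
    have "v (False,True) \<noteq> 0"
    proof
      assume h: "v (False,True) = 0"
      then have "(1 - p2) * v (True,False) = 0" using A(1) v4 by simp
      then have "v (True,False) = 0" using p2 by simp
      then show False using A(6) v12 v4 h by simp
    qed
    then have "v (False,True) > 0" using A(4) by simp
    then have "0 < ((T-R)*p3 - (R-S)*(1-p2)) * v (False,True)" using pos by simp
    then have "0 < (1 - p2) * (sY T R P S v - R)" by (simp only: id)
    then show "R < sY T R P S v" using p2 by (simp add: zero_less_mult_iff)
  qed
  ultimately show ?thesis using geR by linarith
qed

theorem corollary2p2:
  fixes T R P S :: real and p :: mem1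
  assumes "T > R" and "R > P" and "P > S" and "2 * R > T + S"
    and "valid_mem1 p" and "agreeable p" and "fst (snd p) < 1"
  shows "(good T R P S p \<longrightarrow>
            (\<forall>q x0 y0 v. valid_mem1 q \<longrightarrow> \<not> agreeable q \<longrightarrow>
               limit_dist x0 p (mem1_pattern y0 q) v \<longrightarrow> sY T R P S v < R))
       \<and> (\<not> good T R P S p \<longrightarrow>
            (\<exists>q \<in> {(0, 0, 0, 0), (0, 1, 1, 1)}. \<forall>x0 y0 v.
               limit_dist x0 p (mem1_pattern y0 q) v \<longrightarrow>
               sY T R P S v \<ge> R \<and> sX T R P S v < R))
       \<and> (\<not> nash_type T R P S p \<longrightarrow>
            (\<exists>q \<in> {(0, 0, 0, 0), (0, 1, 1, 1)}. \<forall>x0 y0 v.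
               limit_dist x0 p (mem1_pattern y0 q) v \<longrightarrow>
               sY T R P S v > R \<and> sX T R P S v < R))"
proof -
  note ord = assms(1-4)
  obtain p2 p3 p4 where p: "p = (1,p2,p3,p4)"
    using assms(6) unfolding agreeable_def by (cases p) auto
  have vp: "valid_mem1 (1,p2,p3,p4)" using assms(5) p by simp
  have p2: "p2 < 1" using assms(7) p by simp
  have a: "good T R P S p \<longrightarrow>
            (\<forall>q x0 y0 v. valid_mem1 q \<longrightarrow> \<not> agreeable q \<longrightarrow>
               limit_dist x0 p (mem1_pattern y0 q) v \<longrightarrow> sY T R P S v < R)"
  proof (intro impI allI)
    fix q x0 y0 v
    assume g: "good T R P S p" and vq: "valid_mem1 q" and na: "\<not> agreeable q"
      and lim: "limit_dist x0 p (mem1_pattern y0 q) v"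
    show "sY T R P S v < R"
    proof (rule ccontr)
      assume "\<not> sY T R P S v < R"
      then have "R \<le> sY T R P S v" by simp
      then have eq: "sY T R P S v = R \<and> sX T R P S v = R"
        using g valid_mem1_pattern[OF vq] lim unfolding good_def by blast
      have lim': "limit_dist x0 (1,p2,p3,p4) (mem1_pattern y0 q) v" using lim p by simp
      note A = akin[OF vp valid_mem1_pattern[OF vq] lim']
      have "\<not> v (True,True) < 1"
        using sum_payoff(2)[OF A(6) A(3) A(4) A(5), where T=T and R=R and S=S and P=P] eq ord
        unfolding sX_def sY_def by auto
      then have v1: "v (True,True) = 1" and v0: "v (True,False) = 0" "v (False,True) = 0"
        "v (False,False) = 0" using A(2-6) by linarith+
      obtain q1 q2 q3 q4 where q: "q = (q1,q2,q3,q4)" by (cases q) auto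
      have "q1 = 1" using KY[OF vp vq lim'] v1 v0 q by (simp add: sum_outcome)
      then show False using na q by (simp add: agreeable_def)
    qed
  qed
  have b: "\<not> good T R P S p \<longrightarrow>
            (\<exists>q \<in> {(0, 0, 0, 0), (0, 1, 1, 1)}. \<forall>x0 y0 v.
               limit_dist x0 p (mem1_pattern y0 q) v \<longrightarrow>
               sY T R P S v \<ge> R \<and> sX T R P S v < R)"
  proof
    assume ng: "\<not> good T R P S p"
    show "\<exists>q \<in> {(0, 0, 0, 0), (0, 1, 1, 1)}. \<forall>x0 y0 v.
               limit_dist x0 p (mem1_pattern y0 q) v \<longrightarrow>
               sY T R P S v \<ge> R \<and> sX T R P S v < R"
    proof (cases "(T-R)*p4 - (R-P)*(1-p2) < 0")
      case True
      then have c3: "(T-R)*p3 - (R-S)*(1-p2) \<ge> 0"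
        using good_suff[OF ord(1-3) vp p2] ng p by force
      show ?thesis
        by (rule bexI[of _ "(0,1,1,1)"]) (use caseA[OF ord vp p2 c3] p in auto)
    next
      case False
      then have c4: "(T-R)*p4 - (R-P)*(1-p2) \<ge> 0" by simp
      show ?thesis
        by (rule bexI[of _ "(0,0,0,0)"]) (use caseB[OF ord vp p2 c4] p in auto)
    qed
  qed
  have c: "\<not> nash_type T R P S p \<longrightarrow>
            (\<exists>q \<in> {(0, 0, 0, 0), (0, 1, 1, 1)}. \<forall>x0 y0 v.
               limit_dist x0 p (mem1_pattern y0 q) v \<longrightarrow>
               sY T R P S v > R \<and> sX T R P S v < R)"
  proof
    assume nn: "\<not> nash_type T R P S p"
    show "\<exists>q \<in> {(0, 0, 0, 0), (0, 1, 1, 1)}. \<forall>x0 y0 v.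
               limit_dist x0 p (mem1_pattern y0 q) v \<longrightarrow>
               sY T R P S v > R \<and> sX T R P S v < R"
    proof (cases "(T-R)*p4 - (R-P)*(1-p2) \<le> 0")
      case True
      then have c3: "(T-R)*p3 - (R-S)*(1-p2) > 0"
        using nash_suff[OF ord(1-3) vp p2] nn p by force
      then have c3': "(T-R)*p3 - (R-S)*(1-p2) \<ge> 0" by simp
      show ?thesis
        by (rule bexI[of _ "(0,1,1,1)"]) (use caseA[OF ord vp p2 c3'] c3 p in auto)
    next
      case False
      then have c4': "(T-R)*p4 - (R-P)*(1-p2) \<ge> 0" by simp
      show ?thesis
        by (rule bexI[of _ "(0,0,0,0)"]) (use caseB[OF ord vp p2 c4'] False p in auto)
    qed
  qed
  show ?thesis using a b c by blast
qed

end
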